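(* Under the standing assumptions (A1)–(A4), let $\alpha>0$ and $0<\gamma<\frac{1}{m-1}$, and consider the system (Algorithm A) $$\begin{aligned} \dot x&=\mathrm{Prox}_{F^m}\Big[x-\nabla F^0(x)+v+\gamma\textstyle\sum_{j=1}^{m-1}z^j\Big]-x,\\ \dot z^j&=\mathrm{Prox}_{F^j}[x-\gamma z^j]-x,\quad j=1,\dots,m-1,\\ \dot v&=-H_{nq}^{-1}(x-d)-\alpha L_{nq}v-w,\\ \dot w&=\alpha L_{nq}v, \end{aligned}$$ with state $(x,z,v,w)\in\mathbb{R}^{nq}\times\mathbb{R}^{(m-1)nq}\times\mathbb{R}^{nq}\times\mathbb{R}^{nq}$, $z=((z^1)^T,\dots,(z^{m-1})^T)^T$. If $(x^*,z^*,v^*,w^* )$ is an equilibrium of this system and $(\mathbf{1}_n\otimes I_q)^TH_{nq}w^*=\mathbf{0}_q$, then $x^*$ is a solution of the problem $\min_x \sum_i f_i(x_i)$ s.t. $\sum_i x_i=\sum_i d_i$.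
   Context: Standing setup: $n$ agents; agent $i$ has state $x_i\in\mathbb{R}^q$, and $x=(x_1^T,\dots,x_n^T)^T\in\mathbb{R}^{nq}$. Given $d_i\in\mathbb{R}^q$, $d=(d_1^T,\dots,d_n^T)^T$. Integer $m\ge 2$. Each local cost is $f_i=\sum_{j=0}^m f_i^j$; $F^j(x)=\sum_{i=1}^n f_i^j(x_i)$. $\nabla F^0(x)=(\nabla f_1^0(x_1)^T,\dots,\nabla f_n^0(x_n)^T)^T$. Assumptions: (A1) each $f_i^0$ is twice continuously differentiable and strongly convex with a common constant $c>m-1$; (A2) each $f_i^j$, $j=1,\dots,m$, is a proper closed convex function; (A3) the graph is weighted, directed and strongly connected; (A4) the problem is feasible. Proximal operator: $\mathrm{prox}_f[\theta]=\arg\min_\delta\{f(\delta)+\frac12\|\delta-\theta\|^2\}$, and for $\xi=(\xi_1,\dots,\xi_n)\in\mathbb{R}^{nq}$, $\mathrm{Prox}_{F^j}[\xi]=(\mathrm{prox}_{f_1^j}[\xi_1]^T,\dots,\mathrm{prox}_{f_n^j}[\xi_n]^T)^T$. Graph: weighted adjacency matrix $\mathcal{A}=[a_{ij}]$ ($a_{ij}>0$ iff agent $i$ receives from $j$, $a_{ii}=0$), Laplacian $L_n=D^{in}-\mathcal{A}$ with $D^{in}=\mathrm{diag}(\sum_j a_{ij})$; $h=(h_1,\dots,h_n)^T$ is the positive left eigenvector with $h^TL_n=0$, $\sum_i h_i=1$; $H=\mathrm{diag}(h_1,\dots,h_n)$, $H_{nq}=H\otimes I_q$, $L_{nq}=L_n\otimes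 I_q$. *)

theory Defs
  imports "HOL-Analysis.Analysis" "HOL-Library.Extended_Real"
begin

definition proper_fun :: "('a \<Rightarrow> ereal) \<Rightarrow> bool" where
  "proper_fun f \<longleftrightarrow> (\<forall>x. f x \<noteq> -\<infinity>) \<and> (\<exists>x. f x < \<infinity>)"

definition closed_fun :: "('a::topological_space \<Rightarrow> ereal) \<Rightarrow> bool" where
  "closed_fun f \<longleftrightarrow> closed {(x, r::real). f x \<le> ereal r}"

definition convex_efun :: "('a::real_vector \<Rightarrow> ereal) \<Rightarrow> bool" where
  "convex_efun f \<longleftrightarrow> (\<forall>x y t. 0 \<le> t \<and> t \<le> 1 \<longrightarrow>
      f (t *\<^sub>R x + (1 - t) *\<^sub>R y) \<le> ereal t * f x + ereal (1 - t) * f y)"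

definition strongly_convex_with :: "real \<Rightarrow> ('a::real_normed_vector \<Rightarrow> real) \<Rightarrow> bool" where
  "strongly_convex_with c f \<longleftrightarrow> c > 0 \<and> (\<forall>x y t. 0 \<le> t \<and> t \<le> 1 \<longrightarrow>
      f (t *\<^sub>R x + (1 - t) *\<^sub>R y) \<le> t * f x + (1 - t) * f y - c / 2 * t * (1 - t) * (norm (x - y))\<^sup>2)"

definition C2_with_gradient :: "('a::euclidean_space \<Rightarrow> real) \<Rightarrow> ('a \<Rightarrow> 'a) \<Rightarrow> bool" where
  "C2_with_gradient f g \<longleftrightarrow> (\<forall>x. GDERIV f x :> g x) \<and>
     (\<exists>D :: 'a \<Rightarrow> ('a \<Rightarrow>\<^sub>L 'a). (\<forall>x. (g has_derivative blinfun_apply (D x)) (at x)) \<and> continuous_on UNIV D)"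

definition prox :: "('a::real_normed_vector \<Rightarrow> ereal) \<Rightarrow> 'a \<Rightarrow> 'a" where
  "prox f \<theta> = (THE \<delta>. \<forall>y. f \<delta> + ereal ((norm (\<delta> - \<theta>))\<^sup>2 / 2) \<le> f y + ereal ((norm (y - \<theta>))\<^sup>2 / 2))"

end

theory Submission
  imports Defs
begin


lemma lsc_min:
  fixes g :: "'a::topological_space \<Rightarrow> ereal"
  assumes K: "compact K" "K \<noteq> {}"
    and cl: "\<And>r. closed {x. g x \<le> ereal r}"
  shows "\<exists>x\<in>K. \<forall>y\<in>K. g x \<le> g y"
proof -
  define \<mu> where "\<mu> = Inf (g ` K)"
  have "K \<inter> (\<Inter>r\<in>{r. \<mu> < ereal r}. {x. g x \<le> ereal r}) \<noteq> {}"
  proof (rule compact_imp_fip_image[OF K(1)])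
    fix I' assume I': "finite I'" "I' \<subseteq> {r. \<mu> < ereal r}"
    show "K \<inter> (\<Inter>r\<in>I'. {x. g x \<le> ereal r}) \<noteq> {}"
    proof (cases "I' = {}")
      case True then show ?thesis using K by auto
    next
      case False
      define r0 where "r0 = Min I'"
      have "r0 \<in> I'" using I' False r0_def by auto
      then have "\<mu> < ereal r0" using I' by auto
      then obtain y where y: "y \<in> K" "g y < ereal r0" unfolding \<mu>_def by (auto simp: Inf_less_iff)
      have "\<And>r. r \<in> I' \<Longrightarrow> g y \<le> ereal r"
      proof -
        fix r assume "r \<in> I'"
        then have "r0 \<le> r" using I' r0_def by auto
        then show "g y \<le> ereal r" using y by (meson ereal_less_eq(3) less_imp_le order_trans)
      qed
      then show ?thesis using y by blast
    qed
  qed (use cl in auto)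
  then obtain x where x: "x \<in> K" "\<And>r. \<mu> < ereal r \<Longrightarrow> g x \<le> ereal r" by blast
  have "g x \<le> \<mu>"
  proof (rule dense_ge)
    fix z assume z: "\<mu> < z"
    show "g x \<le> z"
    proof (cases z)
      case (real r) then show ?thesis using x z by auto
    qed (use z in auto)
  qed
  then show ?thesis using x unfolding \<mu>_def by (meson INF_lower order_trans)
qed



lemma closed_sub_plus:
  fixes f :: "'a::real_normed_vector \<Rightarrow> ereal"
  assumes "closed_fun f" "continuous_on UNIV q"
  shows "closed {x. f x + ereal (q x) \<le> ereal r}"
proof -
  have eq: "{x. f x + ereal (q x) \<le> ereal r} = (\<lambda>x. (x, r - q x)) -` {(x, s::real). f x \<le> ereal s}"
  proof (rule set_eqI)
    fix x show "x \<in> {x. f x + ereal (q x) \<le> ereal r} \<longleftrightarrow> x \<in> (\<lambda>x. (x, r - q x)) -` {(x, s::real). f x \<le> ereal s}"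
      by (cases "f x") auto
  qed
  show ?thesis unfolding eq
    apply (rule continuous_closed_vimage)
    using assms(1) unfolding closed_fun_def apply simp
    using assms(2)
    by (intro continuous_intros) (auto simp: continuous_on_eq_continuous_at)
qed

lemma closed_sub:
  fixes f :: "'a::real_normed_vector \<Rightarrow> ereal"
  assumes "closed_fun f"
  shows "closed {x. f x \<le> ereal r}"
  using closed_sub_plus[OF assms, of "\<lambda>_. 0" r] by simp

lemma lower_bound:
  fixes f :: "'a::euclidean_space \<Rightarrow> ereal"
  assumes pr: "proper_fun f" and cl: "closed_fun f" and cv: "convex_efun f"
    and y0: "f y0 = ereal b"
  shows "\<exists>A D. D \<ge> 0 \<and> (\<forall>y. ereal (A - D * norm (y - y0)) \<le> f y)"
proof -
  obtain p where p: "p \<in> cball y0 1" "\<And>y. y \<in> cball y0 1 \<Longrightarrow> f p \<le> f y"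
    using lsc_min[of "cball y0 1" f] closed_sub[OF cl] by auto
  have "f p \<le> ereal b" using p(2)[of y0] y0 by auto
  moreover have "f p \<noteq> -\<infinity>" using pr unfolding proper_fun_def by auto
  ultimately obtain m0 where m0: "f p = ereal m0" "m0 \<le> b" by (cases "f p") auto
  define D where "D = b - m0"
  have D: "D \<ge> 0" using m0 D_def by auto
  have "ereal (b - D - D * norm (y - y0)) \<le> f y" for y
  proof (cases "norm (y - y0) \<le> 1")
    case True
    then have "f p \<le> f y" using p(2)[of y] by (metis dist_norm mem_cball norm_minus_commute)
    have "b - D - D * norm (y - y0) \<le> m0" using D D_def
      by (simp add: mult_nonneg_nonneg)
    then have "ereal (b - D - D * norm (y - y0)) \<le> ereal m0" by simp
    with \<open>f p \<le> f y\<close> m0(1) show ?thesis by (metis order.trans)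
  next
    case False
    define s where "s = norm (y - y0)"
    have s1: "s > 1" using False s_def by auto
    define t where "t = 1 / s"
    have t: "0 \<le> t" "t \<le> 1" using s1 t_def by auto
    define z where "z = t *\<^sub>R y + (1 - t) *\<^sub>R y0"
    have "z - y0 = t *\<^sub>R (y - y0)" unfolding z_def by (simp add: algebra_simps)
    moreover have "y \<noteq> y0" using s1 s_def by auto
    ultimately have "norm (z - y0) = 1" using s1 t_def s_def by simp
    then have "f p \<le> f z" using p(2)[of z] by (metis dist_norm mem_cball norm_minus_commute order_refl)
    also have "f z \<le> ereal t * f y + ereal (1 - t) * f y0"
      using cv t unfolding convex_efun_def z_def by (simp only:)
    finally have fz: "ereal m0 \<le> ereal t * f y + ereal (1 - t) * ereal b" using m0 y0 by simp
    show ?thesis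
    proof (cases "f y")
      case (real a)
      have "m0 \<le> t * a + (1 - t) * b" using fz real by simp
      then have "s * m0 \<le> s * (t * a + (1 - t) * b)" using s1 by (intro mult_left_mono) auto
      also have "\<dots> = a + (s - 1) * b" using s1 t_def by (simp add: field_simps)
      finally have "s * m0 \<le> a + (s - 1) * b" .
      then have "b - D - D * s \<le> a" using m0(2) unfolding D_def by (simp add: algebra_simps)
      then show ?thesis using real s_def by simp
    next
      case PInf then show ?thesis by simp
    next
      case MInf then show ?thesis using pr unfolding proper_fun_def by auto
    qed
  qed
  then show ?thesis using D by blast
qed



lemma parallelogram_mid:
  fixes u w :: "'a::real_inner"
  shows "(norm ((1/2) *\<^sub>R u + (1/2) *\<^sub>R w))\<^sup>2 = (norm u)\<^sup>2 / 2 + (norm w)\<^sup>2 / 2 - (norm (u - w))\<^sup>2 / 4"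
  apply (simp add: power2_norm_eq_inner inner_simps algebra_simps inner_commute)
  apply (simp add: field_simps)
  done

lemma prox_exists:
  fixes f :: "'a::euclidean_space \<Rightarrow> ereal"
  assumes pr: "proper_fun f" and cl: "closed_fun f" and cv: "convex_efun f"
  shows "\<exists>\<delta>. \<forall>y. f \<delta> + ereal ((norm (\<delta> - \<theta>))\<^sup>2 / 2) \<le> f y + ereal ((norm (y - \<theta>))\<^sup>2 / 2)"
proof -
  obtain y0 where "f y0 < \<infinity>" using pr unfolding proper_fun_def by auto
  moreover have "f y0 \<noteq> -\<infinity>" using pr unfolding proper_fun_def by auto
  ultimately obtain b where b: "f y0 = ereal b" by (cases "f y0") auto
  obtain A D where D: "D \<ge> 0" and AD: "\<And>y. ereal (A - D * norm (y - y0)) \<le> f y"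
    using lower_bound[OF pr cl cv b] by blast
  define q where "q y = (norm (y - \<theta>))\<^sup>2 / 2" for y
  define \<phi> where "\<phi> y = f y + ereal (q y)" for y
  define e where "e = norm (y0 - \<theta>)"
  define R where "R = 2 * (e + D) + 2 + \<bar>b\<bar> + \<bar>A\<bar>"
  have e0: "e \<ge> 0" unfolding e_def by simp
  have R1: "R \<ge> 2 * (e + D) + 2" "R > \<bar>b\<bar> + \<bar>A\<bar>" using e0 D unfolding R_def by auto
  have cq: "continuous_on UNIV q" unfolding q_def by (intro continuous_intros) auto
  obtain p where p: "p \<in> cball y0 R" "\<And>y. y \<in> cball y0 R \<Longrightarrow> \<phi> p \<le> \<phi> y"
    using lsc_min[of "cball y0 R" \<phi>] closed_sub_plus[OF cl cq] R1 D e0 unfolding \<phi>_def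
    by (metis (no_types, lifting) add_nonneg_nonneg cball_eq_empty compact_cball
        linorder_not_le mult_nonneg_nonneg not_numeral_le_zero order.trans zero_le_numeral)
  have y0K: "y0 \<in> cball y0 R" using R1 D e0 by auto
  have "\<phi> p \<le> \<phi> y" for y
  proof (cases "y \<in> cball y0 R")
    case True then show ?thesis using p by auto
  next
    case False
    define s where "s = norm (y - y0)"
    have sR: "s > R" using False unfolding s_def by (simp add: dist_norm norm_minus_commute)
    have tri: "s \<le> norm (y - \<theta>) + e" unfolding s_def e_def
      using norm_triangle_ineq[of "y - \<theta>" "\<theta> - y0"] by (simp add: norm_minus_commute)
    have se: "0 \<le> s - e" using sR R1 D e0 by (smt (verit))
    then have "(s - e)\<^sup>2 \<le> (norm (y - \<theta>))\<^sup>2" using tri by (intro power_mono) auto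
    then have q1: "(s - e)\<^sup>2 / 2 \<le> q y" unfolding q_def by simp
    have s1a: "s \<ge> 1" using sR R1 D e0 by (smt (verit))
    have s1b: "s / 2 - e - D \<ge> 1" using sR R1 D e0 by (smt (verit) field_sum_of_halves)
    note s1 = s1a s1b
    have "s * 1 \<le> s * (s / 2 - e - D)" using s1 by (intro mult_left_mono) auto
    then have "s \<le> (s - e)\<^sup>2 / 2 - e\<^sup>2 / 2 - D * s" by (simp add: power2_eq_square algebra_simps)
    then have key: "b + e\<^sup>2 / 2 \<le> A - D * s + q y" using q1 sR R1 by linarith
    have "\<phi> y0 = ereal (b + e\<^sup>2 / 2)" unfolding \<phi>_def q_def e_def b by simp
    also have "\<dots> \<le> ereal (A - D * s) + ereal (q y)" using key by simp
    also have "\<dots> \<le> \<phi> y" unfolding \<phi>_def s_def by (intro add_right_mono AD)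
    finally have "\<phi> y0 \<le> \<phi> y" .
    then show ?thesis using p(2)[OF y0K] by (metis order.trans)
  qed
  then show ?thesis unfolding \<phi>_def q_def by blast
qed

lemma prox_unique:
  fixes f :: "'a::euclidean_space \<Rightarrow> ereal"
  assumes pr: "proper_fun f" and cv: "convex_efun f"
    and d1: "\<forall>y. f d1 + ereal ((norm (d1 - \<theta>))\<^sup>2 / 2) \<le> f y + ereal ((norm (y - \<theta>))\<^sup>2 / 2)"
    and d2: "\<forall>y. f d2 + ereal ((norm (d2 - \<theta>))\<^sup>2 / 2) \<le> f y + ereal ((norm (y - \<theta>))\<^sup>2 / 2)"
  shows "d1 = d2"
proof -
  obtain y0 where y0: "f y0 < \<infinity>" using pr unfolding proper_fun_def by auto
  have fin: "\<exists>a. f d = ereal a" if d: "\<forall>y. f d + ereal ((norm (d - \<theta>))\<^sup>2 / 2) \<le> f y + ereal ((norm (y - \<theta>))\<^sup>2 / 2)" for d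
  proof -
    have "f y0 + ereal ((norm (y0 - \<theta>))\<^sup>2 / 2) < \<infinity>" using y0 by simp
    then have "f d + ereal ((norm (d - \<theta>))\<^sup>2 / 2) < \<infinity>" using d[rule_format, of y0]
      by (rule le_less_trans[rotated])
    then have "f d \<noteq> \<infinity>" by auto
    moreover have "f d \<noteq> -\<infinity>" using pr unfolding proper_fun_def by auto
    ultimately show ?thesis by (cases "f d") auto
  qed
  obtain a1 where a1: "f d1 = ereal a1" using fin[OF d1] by blast
  obtain a2 where a2: "f d2 = ereal a2" using fin[OF d2] by blast
  define q where "q y = (norm (y - \<theta>))\<^sup>2 / 2" for y
  have e12: "a1 + q d1 \<le> a2 + q d2" using d1[rule_format, of d2] a1 a2 unfolding q_def by simp
  have e21: "a2 + q d2 \<le> a1 + q d1" using d2[rule_format, of d1] a1 a2 unfolding q_def by simp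
  define mid where "mid = (1/2::real) *\<^sub>R d1 + (1 - 1/2) *\<^sub>R d2"
  have "f mid \<le> ereal (1/2) * f d1 + ereal (1 - 1/2) * f d2"
    using cv unfolding convex_efun_def mid_def
    by (elim allE[of _ d1] allE[of _ d2] allE[of _ "1/2"]) simp
  then have fm: "f mid \<le> ereal ((a1 + a2) / 2)" using a1 a2 by (simp add: field_simps)
  have "mid - \<theta> = (1/2) *\<^sub>R (d1 - \<theta>) + (1/2) *\<^sub>R (d2 - \<theta>)" unfolding mid_def by (simp add: algebra_simps flip: scaleR_add_left)
  then have qm: "q mid = q d1 / 2 + q d2 / 2 - (norm (d1 - d2))\<^sup>2 / 8"
    unfolding q_def using parallelogram_mid[of "d1 - \<theta>" "d2 - \<theta>"] by simp
  have "ereal (a1 + q d1) \<le> f mid + ereal (q mid)" using d1[rule_format, of mid] a1 unfolding q_def by simp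
  also have "\<dots> \<le> ereal ((a1 + a2) / 2) + ereal (q mid)" using fm by (intro add_right_mono)
  finally have "a1 + q d1 \<le> (a1 + a2) / 2 + q mid" by simp
  then have "(norm (d1 - d2))\<^sup>2 \<le> 0" using qm e12 e21 by argo
  then show ?thesis by simp
qed

lemma prox_min:
  fixes f :: "'a::euclidean_space \<Rightarrow> ereal"
  assumes pr: "proper_fun f" and cl: "closed_fun f" and cv: "convex_efun f"
  shows "\<forall>y. f (prox f \<theta>) + ereal ((norm (prox f \<theta> - \<theta>))\<^sup>2 / 2) \<le> f y + ereal ((norm (y - \<theta>))\<^sup>2 / 2)"
proof -
  have "\<exists>!\<delta>. \<forall>y. f \<delta> + ereal ((norm (\<delta> - \<theta>))\<^sup>2 / 2) \<le> f y + ereal ((norm (y - \<theta>))\<^sup>2 / 2)"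
    using prox_exists[OF pr cl cv] prox_unique[OF pr cv] by blast
  then show ?thesis unfolding prox_def by (rule theI')
qed



lemma norm_add_sq:
  fixes u v :: "'a::real_inner"
  shows "(norm (u + t *\<^sub>R v))\<^sup>2 = (norm u)\<^sup>2 + 2 * t * (u \<bullet> v) + t * t * (norm v)\<^sup>2"
  by (simp add: power2_norm_eq_inner inner_add_left inner_add_right inner_commute algebra_simps)

lemma prox_subgrad:
  fixes f :: "'a::euclidean_space \<Rightarrow> ereal"
  assumes pr: "proper_fun f" and cv: "convex_efun f"
    and mn: "\<forall>y. f x + ereal ((norm (x - \<theta>))\<^sup>2 / 2) \<le> f y + ereal ((norm (y - \<theta>))\<^sup>2 / 2)"
  shows "f x + ereal ((\<theta> - x) \<bullet> (y - x)) \<le> f y"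
proof -
  obtain y0 where y0: "f y0 < \<infinity>" using pr unfolding proper_fun_def by auto
  have "f y0 + ereal ((norm (y0 - \<theta>))\<^sup>2 / 2) < \<infinity>" using y0 by simp
  then have "f x + ereal ((norm (x - \<theta>))\<^sup>2 / 2) < \<infinity>" using mn[rule_format, of y0]
    by (rule le_less_trans[rotated])
  then have "f x \<noteq> \<infinity>" by auto
  moreover have nm: "\<And>z. f z \<noteq> -\<infinity>" using pr unfolding proper_fun_def by auto
  ultimately obtain fx where fx: "f x = ereal fx" by (cases "f x") auto
  show ?thesis
  proof (cases "f y")
    case PInf then show ?thesis by simp
  next
    case MInf then show ?thesis using nm by auto
  next
    case (real a)
    define P where "P = (x - \<theta>) \<bullet> (y - x)"
    define N where "N = (norm (y - x))\<^sup>2"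
    have N0: "N \<ge> 0" unfolding N_def by simp
    have "fx \<le> a + P"
    proof (rule ccontr)
      assume "\<not> fx \<le> a + P"
      then have g: "fx - a - P > 0" by simp
      define t where "t = (if N = 0 then 1 else min 1 ((fx - a - P) / N))"
      have t: "0 < t" "t \<le> 1" using g N0 unfolding t_def by auto
      have tN: "t * N \<le> fx - a - P"
      proof (cases "N = 0")
        case True then show ?thesis using g by simp
      next
        case False
        then have "t \<le> (fx - a - P) / N" unfolding t_def by simp
        then have "t * N \<le> (fx - a - P) / N * N" using N0 by (intro mult_right_mono) auto
        then show ?thesis using False by simp
      qed
      define z where "z = t *\<^sub>R y + (1 - t) *\<^sub>R x"
      have "f z \<le> ereal t * f y + ereal (1 - t) * f x"
        using cv t unfolding convex_efun_def z_def by (elim allE[of _ y] allE[of _ x] allE[of _ t]) simp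
      then have fz: "f z \<le> ereal (t * a + (1 - t) * fx)" using real fx by simp
      then obtain b where b: "f z = ereal b" "b \<le> t * a + (1 - t) * fx"
        using nm[of z] by (cases "f z") auto
      have zt: "z - \<theta> = (x - \<theta>) + t *\<^sub>R (y - x)" unfolding z_def by (simp add: algebra_simps)
      have nz: "(norm (z - \<theta>))\<^sup>2 = (norm (x - \<theta>))\<^sup>2 + 2 * t * P + t\<^sup>2 * N"
        unfolding zt P_def N_def using norm_add_sq[of "x - \<theta>" t "y - x"] by (simp add: power2_eq_square)
      have "fx + (norm (x - \<theta>))\<^sup>2 / 2 \<le> b + (norm (z - \<theta>))\<^sup>2 / 2"
        using mn[rule_format, of z] fx b by simp
      then have "fx \<le> t * a + (1 - t) * fx + t * P + t\<^sup>2 * N / 2" using nz b(2) by argo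
      then have "t * fx \<le> t * (a + P + t * N / 2)" by (simp add: algebra_simps power2_eq_square)
      then have "fx \<le> a + P + t * N / 2" using t by simp
      then show False using tN g by argo
    qed
    then have "fx + (\<theta> - x) \<bullet> (y - x) \<le> a" unfolding P_def by (simp add: inner_simps inner_commute algebra_simps)
    then show ?thesis using fx real by simp
  qed
qed

lemma grad_ineq:
  fixes f0 :: "'a::euclidean_space \<Rightarrow> real"
  assumes sc: "strongly_convex_with c f0" and dg: "C2_with_gradient f0 g"
  shows "f0 x + g x \<bullet> (y - x) \<le> f0 y"
proof -
  define d where "d = y - x"
  define \<phi> where "\<phi> t = f0 (x + t *\<^sub>R d)" for t :: real
  have cvx: "convex_on UNIV \<phi>"
  proof (rule convex_onI)
    fix t a b :: real assume t: "0 < t" "t < 1"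
    have eq: "x + ((1 - t) *\<^sub>R a + t *\<^sub>R b) *\<^sub>R d = t *\<^sub>R (x + b *\<^sub>R d) + (1 - t) *\<^sub>R (x + a *\<^sub>R d)"
      by (simp add: algebra_simps)
    have "f0 (t *\<^sub>R (x + b *\<^sub>R d) + (1 - t) *\<^sub>R (x + a *\<^sub>R d))
          \<le> t * f0 (x + b *\<^sub>R d) + (1 - t) * f0 (x + a *\<^sub>R d)
             - c / 2 * t * (1 - t) * (norm ((x + b *\<^sub>R d) - (x + a *\<^sub>R d)))\<^sup>2"
      using sc[unfolded strongly_convex_with_def, THEN conjunct2, rule_format, where x="x + b *\<^sub>R d" and y="x + a *\<^sub>R d" and t=t] t
      by linarith
    moreover have "0 \<le> c / 2 * t * (1 - t) * (norm ((x + b *\<^sub>R d) - (x + a *\<^sub>R d)))\<^sup>2"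
      using sc t unfolding strongly_convex_with_def by auto
    ultimately show "\<phi> ((1 - t) *\<^sub>R a + t *\<^sub>R b) \<le> (1 - t) * \<phi> a + t * \<phi> b"
      unfolding \<phi>_def eq by simp
  qed simp
  have gd: "(f0 has_derivative (\<lambda>h. h \<bullet> g z)) (at z)" for z
    using dg unfolding C2_with_gradient_def gderiv_def by auto
  have "((\<lambda>t. x + t *\<^sub>R d) has_derivative (\<lambda>t. t *\<^sub>R d)) (at 0)"
    by (intro derivative_eq_intros) auto
  from has_derivative_compose[OF this, of f0 "\<lambda>h. h \<bullet> g x"] gd[of x]
  have "(\<phi> has_derivative (\<lambda>t. (t *\<^sub>R d) \<bullet> g x)) (at 0)" unfolding \<phi>_def by (simp add: o_def)
  then have "(\<phi> has_field_derivative (d \<bullet> g x)) (at 0)"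
    by (rule has_derivative_imp_has_field_derivative) simp
  then have "\<phi> 1 - \<phi> 0 \<ge> (d \<bullet> g x) * (1 - 0)"
    using convex_on_imp_above_tangent[OF cvx, of 0 1] by simp
  then show ?thesis unfolding \<phi>_def d_def by (simp add: inner_commute)
qed

lemma consensus:
  fixes a :: "'n::finite \<Rightarrow> 'n \<Rightarrow> real" and u :: "'n \<Rightarrow> real"
  assumes nn: "\<And>i j. a i j \<ge> 0"
    and sc: "\<And>i j. (i, j) \<in> {(k, l). a k l > 0}\<^sup>*"
    and eq: "\<And>i. (\<Sum>k\<in>UNIV. ((if i = k then (\<Sum>l\<in>UNIV. a i l) else 0) - a i k) * u k) = 0"
  shows "u i = u j"
proof -
  have eq2: "(\<Sum>k\<in>UNIV. a i k * (u i - u k)) = 0" for i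
  proof -
    have "(\<Sum>k\<in>UNIV. ((if i = k then (\<Sum>l\<in>UNIV. a i l) else 0) - a i k) * u k)
        = (\<Sum>k\<in>UNIV. (if i = k then (\<Sum>l\<in>UNIV. a i l) * u k else 0)) - (\<Sum>k\<in>UNIV. a i k * u k)"
      by (subst sum_subtractf[symmetric], rule sum.cong) (auto simp: left_diff_distrib)
    also have "\<dots> = (\<Sum>l\<in>UNIV. a i l) * u i - (\<Sum>k\<in>UNIV. a i k * u k)"
      by (simp add: sum.delta)
    also have "\<dots> = (\<Sum>k\<in>UNIV. a i k * (u i - u k))"
      by (simp add: sum_distrib_right right_diff_distrib sum_subtractf)
    finally show ?thesis using eq[of i] by simp
  qed
  obtain i0 where i0: "\<And>k. u k \<le> u i0"
  proof -
    have "Max (range u) \<in> range u" by (rule Max_in) auto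
    then obtain i0 where "u i0 = Max (range u)" by (metis imageE)
    moreover have "\<And>k. u k \<le> Max (range u)" by (rule Max_ge) auto
    ultimately show ?thesis using that by metis
  qed
  have stp: "u k = u i0" if "u l = u i0" "a l k > 0" for l k
  proof -
    have nn2: "\<And>k. 0 \<le> a l k * (u l - u k)" using nn i0 that(1) by (simp add: mult_nonneg_nonneg)
    have "a l k * (u l - u k) = 0"
      using eq2[of l] sum_nonneg_eq_0_iff[of UNIV "\<lambda>k. a l k * (u l - u k)"] nn2 by auto
    then show ?thesis using that by simp
  qed
  have all: "u j = u i0" for j
  proof -
    have "(i0, j) \<in> {(k, l). a k l > 0}\<^sup>*" by (rule sc)
    then show ?thesis
    proof (induction rule: rtrancl_induct)
      case base then show ?case by simp
    next
      case (step y z)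
      then have "a y z > 0" by simp
      with step.IH show ?case by (rule stp)
    qed
  qed
  show ?thesis using all[of i] all[of j] by simp
qed



theorem lemma4:
  fixes m :: nat and c \<alpha> \<gamma> :: real
    and f0 :: "'n::finite \<Rightarrow> real^'q \<Rightarrow> real"
    and g0 :: "'n \<Rightarrow> real^'q \<Rightarrow> real^'q"
    and f :: "nat \<Rightarrow> 'n \<Rightarrow> real^'q \<Rightarrow> ereal"
    and a :: "'n \<Rightarrow> 'n \<Rightarrow> real"
    and h :: "'n \<Rightarrow> real"
    and d :: "'n \<Rightarrow> real^'q"
    and xs vs ws :: "'n \<Rightarrow> real^'q"
    and zs :: "nat \<Rightarrow> 'n \<Rightarrow> real^'q"
  assumes m2: "m \<ge> 2"
    and A1: "\<And>i. strongly_convex_with c (f0 i) \<and> C2_with_gradient (f0 i) (g0 i)"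
    and cbound: "c > real m - 1"
    and A2: "\<And>i j. j \<in> {1..m} \<Longrightarrow> proper_fun (f j i) \<and> closed_fun (f j i) \<and> convex_efun (f j i)"
    and A3_nonneg: "\<And>i j. a i j \<ge> 0"
    and A3_diag: "\<And>i. a i i = 0"
    and A3_sc: "\<And>i j. (i, j) \<in> {(k, l). a k l > 0}\<^sup>*"
    and A4: "\<exists>y::'n \<Rightarrow> real^'q. (\<Sum>i\<in>UNIV. y i) = (\<Sum>i\<in>UNIV. d i) \<and>
               (\<Sum>i\<in>UNIV. ereal (f0 i (y i)) + (\<Sum>j\<in>{1..m}. f j i (y i))) < \<infinity>"
    and h_pos: "\<And>i. h i > 0"
    and h_sum: "(\<Sum>i\<in>UNIV. h i) = 1"
    and h_left: "\<And>k. (\<Sum>i\<in>UNIV. h i * ((if i = k then (\<Sum>l\<in>UNIV. a i l) else 0) - a i k)) = 0"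
    and alpha: "\<alpha> > 0"
    and gamma: "0 < \<gamma>" "\<gamma> < 1 / (real m - 1)"
    and eq_x: "\<And>i. prox (f m i) (xs i - g0 i (xs i) + vs i + \<gamma> *\<^sub>R (\<Sum>j\<in>{1..m-1}. zs j i)) - xs i = 0"
    and eq_z: "\<And>i j. j \<in> {1..m-1} \<Longrightarrow> prox (f j i) (xs i - \<gamma> *\<^sub>R zs j i) - xs i = 0"
    and eq_v: "\<And>i. - ((1 / h i) *\<^sub>R (xs i - d i))
               - \<alpha> *\<^sub>R (\<Sum>k\<in>UNIV. ((if i = k then (\<Sum>l\<in>UNIV. a i l) else 0) - a i k) *\<^sub>R vs k)
               - ws i = 0"
    and eq_w: "\<And>i. \<alpha> *\<^sub>R (\<Sum>k\<in>UNIV. ((if i = k then (\<Sum>l\<in>UNIV. a i l) else 0) - a i k) *\<^sub>R vs k) = 0"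
    and w_cond: "(\<Sum>i\<in>UNIV. h i *\<^sub>R ws i) = 0"
  shows "(\<Sum>i\<in>UNIV. xs i) = (\<Sum>i\<in>UNIV. d i) \<and>
         (\<forall>y::'n \<Rightarrow> real^'q. (\<Sum>i\<in>UNIV. y i) = (\<Sum>i\<in>UNIV. d i) \<longrightarrow>
            (\<Sum>i\<in>UNIV. ereal (f0 i (xs i)) + (\<Sum>j\<in>{1..m}. f j i (xs i)))
              \<le> (\<Sum>i\<in>UNIV. ereal (f0 i (y i)) + (\<Sum>j\<in>{1..m}. f j i (y i))))"
proof -
  have Lw: "(\<Sum>k\<in>UNIV. ((if i = k then (\<Sum>l\<in>UNIV. a i l) else 0) - a i k) *\<^sub>R vs k) = 0" for i
    using eq_w[of i] alpha by simp
  have vcons: "vs i = vs j" for i j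
  proof -
    have "vs i $ c = vs j $ c" for c
    proof (rule consensus[of a "\<lambda>k. vs k $ c" i j])
      fix i
      show "(\<Sum>k\<in>UNIV. ((if i = k then (\<Sum>l\<in>UNIV. a i l) else 0) - a i k) * vs k $ c) = 0"
        using arg_cong[OF Lw[of i], of "\<lambda>v. v $ c"] by simp
    qed (use A3_nonneg A3_sc in auto)
    then show ?thesis by (simp add: vec_eq_iff)
  qed
  define v0 where "v0 = vs undefined"
  have v0: "vs i = v0" for i unfolding v0_def by (rule vcons)
  have xd: "xs i - d i = - (h i *\<^sub>R ws i)" for i
  proof -
    have "(1 / h i) *\<^sub>R (xs i - d i) = - ws i" using eq_v[of i] Lw[of i] by (simp add: algebra_simps)
    then have "h i *\<^sub>R ((1 / h i) *\<^sub>R (xs i - d i)) = h i *\<^sub>R (- ws i)" by simp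
    then show ?thesis using h_pos[of i] by simp
  qed
  have feas: "(\<Sum>i\<in>UNIV. xs i) = (\<Sum>i\<in>UNIV. d i)"
  proof -
    have "(\<Sum>i\<in>UNIV. xs i) - (\<Sum>i\<in>UNIV. d i) = (\<Sum>i\<in>UNIV. xs i - d i)" by (simp add: sum_subtractf)
    also have "\<dots> = - (\<Sum>i\<in>UNIV. h i *\<^sub>R ws i)" by (simp add: xd sum_negf)
    also have "\<dots> = 0" using w_cond by simp
    finally show ?thesis by simp
  qed
  have m_notin: "m \<notin> {1..m-1}" using m2 by auto
  have m_split: "{1..m} = insert m {1..m-1}" using m2 by auto
  have pertinent: "ereal (f0 i (xs i)) + (\<Sum>j\<in>{1..m}. f j i (xs i)) + ereal (v0 \<bullet> (y - xs i))
      \<le> ereal (f0 i y) + (\<Sum>j\<in>{1..m}. f j i y)" for i y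
  proof -
    define \<delta> where "\<delta> = y - xs i"
    define Z where "Z = (\<Sum>j\<in>{1..m-1}. zs j i)"
    define \<theta> where "\<theta> = xs i - g0 i (xs i) + vs i + \<gamma> *\<^sub>R Z"
    have Am: "proper_fun (f m i)" "closed_fun (f m i)" "convex_efun (f m i)" using A2[of m i] m2 by auto
    have px: "prox (f m i) \<theta> = xs i" using eq_x[of i] unfolding \<theta>_def Z_def by simp
    have sm: "f m i (xs i) + ereal ((\<theta> - xs i) \<bullet> \<delta>) \<le> f m i y"
      using prox_subgrad[OF Am(1) Am(3) prox_min[OF Am, of \<theta>, unfolded px], of y] unfolding \<delta>_def .
    have sj: "f j i (xs i) + ereal ((- \<gamma> *\<^sub>R zs j i) \<bullet> \<delta>) \<le> f j i y" if j: "j \<in> {1..m-1}" for j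
    proof -
      have Aj: "proper_fun (f j i)" "closed_fun (f j i)" "convex_efun (f j i)" using A2[of j i] j by auto
      have pj: "prox (f j i) (xs i - \<gamma> *\<^sub>R zs j i) = xs i" using eq_z[OF j, of i] by simp
      have "f j i (xs i) + ereal ((xs i - \<gamma> *\<^sub>R zs j i - xs i) \<bullet> (y - xs i)) \<le> f j i y"
        using prox_subgrad[OF Aj(1) Aj(3) prox_min[OF Aj, of "xs i - \<gamma> *\<^sub>R zs j i", unfolded pj], of y] .
      then show ?thesis unfolding \<delta>_def by simp
    qed
    have s0: "ereal (f0 i (xs i)) + ereal (g0 i (xs i) \<bullet> \<delta>) \<le> ereal (f0 i y)"
      using grad_ineq[of c "f0 i" "g0 i" "xs i" y] A1[of i] unfolding \<delta>_def by simp
    have sS: "(\<Sum>j\<in>{1..m-1}. f j i (xs i)) + ereal (\<Sum>j\<in>{1..m-1}. (- \<gamma> *\<^sub>R zs j i) \<bullet> \<delta>)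
        \<le> (\<Sum>j\<in>{1..m-1}. f j i y)"
    proof -
      have "(\<Sum>j\<in>{1..m-1}. f j i (xs i)) + ereal (\<Sum>j\<in>{1..m-1}. (- \<gamma> *\<^sub>R zs j i) \<bullet> \<delta>)
          = (\<Sum>j\<in>{1..m-1}. f j i (xs i) + ereal ((- \<gamma> *\<^sub>R zs j i) \<bullet> \<delta>))"
        by (simp add: sum.distrib sum_ereal)
      also have "\<dots> \<le> (\<Sum>j\<in>{1..m-1}. f j i y)" by (rule sum_mono) (rule sj)
      finally show ?thesis .
    qed
    have coef: "g0 i (xs i) \<bullet> \<delta> + (\<theta> - xs i) \<bullet> \<delta> + (\<Sum>j\<in>{1..m-1}. (- \<gamma> *\<^sub>R zs j i) \<bullet> \<delta>) = v0 \<bullet> \<delta>"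
    proof -
      have "(\<Sum>j\<in>{1..m-1}. (- \<gamma> *\<^sub>R zs j i) \<bullet> \<delta>) = (- \<gamma> *\<^sub>R Z) \<bullet> \<delta>"
        unfolding Z_def by (simp add: inner_sum_left sum_distrib_left sum_negf)
      then show ?thesis unfolding \<theta>_def using v0[of i] by (simp add: inner_simps)
    qed
    define A0 where "A0 = ereal (f0 i (xs i))"
    define Am' where "Am' = f m i (xs i)"
    define S where "S = (\<Sum>j\<in>{1..m-1}. f j i (xs i))"
    define e0 where "e0 = g0 i (xs i) \<bullet> \<delta>"
    define em where "em = (\<theta> - xs i) \<bullet> \<delta>"
    define es where "es = (\<Sum>j\<in>{1..m-1}. (- \<gamma> *\<^sub>R zs j i) \<bullet> \<delta>)"
    have "ereal (f0 i (xs i)) + (\<Sum>j\<in>{1..m}. f j i (xs i)) + ereal (v0 \<bullet> (y - xs i))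
        = A0 + (Am' + S) + (ereal e0 + ereal em + ereal es)"
      unfolding A0_def Am'_def S_def e0_def em_def es_def m_split sum.insert[OF finite_atLeastAtMost m_notin]
      using coef unfolding \<delta>_def by simp
    also have "\<dots> = (A0 + ereal e0) + ((Am' + ereal em) + (S + ereal es))"
      by (simp only: ac_simps)
    also have "\<dots> \<le> ereal (f0 i y) + (f m i y + (\<Sum>j\<in>{1..m-1}. f j i y))"
      unfolding A0_def Am'_def S_def e0_def em_def es_def
      using s0 sm sS by (intro add_mono) simp_all
    also have "\<dots> = ereal (f0 i y) + (\<Sum>j\<in>{1..m}. f j i y)"
      unfolding m_split sum.insert[OF finite_atLeastAtMost m_notin] by simp
    finally show ?thesis .
  qed
  have opt: "(\<Sum>i\<in>UNIV. ereal (f0 i (xs i)) + (\<Sum>j\<in>{1..m}. f j i (xs i)))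
              \<le> (\<Sum>i\<in>UNIV. ereal (f0 i (y i)) + (\<Sum>j\<in>{1..m}. f j i (y i)))"
    if y: "(\<Sum>i\<in>UNIV. y i) = (\<Sum>i\<in>UNIV. d i)" for y :: "'n \<Rightarrow> real^'q"
  proof -
    have z: "(\<Sum>i\<in>UNIV. v0 \<bullet> (y i - xs i)) = 0"
    proof -
      have "(\<Sum>i\<in>UNIV. v0 \<bullet> (y i - xs i)) = v0 \<bullet> ((\<Sum>i\<in>UNIV. y i) - (\<Sum>i\<in>UNIV. xs i))"
        by (simp add: inner_diff_right inner_sum_right sum_subtractf)
      then show ?thesis using y feas by simp
    qed
    have "(\<Sum>i\<in>UNIV. ereal (f0 i (xs i)) + (\<Sum>j\<in>{1..m}. f j i (xs i)))
        = (\<Sum>i\<in>UNIV. ereal (f0 i (xs i)) + (\<Sum>j\<in>{1..m}. f j i (xs i))) + ereal (\<Sum>i\<in>UNIV. v0 \<bullet> (y i - xs i))"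
      using z by simp
    also have "\<dots> = (\<Sum>i\<in>UNIV. ereal (f0 i (xs i)) + (\<Sum>j\<in>{1..m}. f j i (xs i)) + ereal (v0 \<bullet> (y i - xs i)))"
      by (simp add: sum.distrib sum_ereal)
    also have "\<dots> \<le> (\<Sum>i\<in>UNIV. ereal (f0 i (y i)) + (\<Sum>j\<in>{1..m}. f j i (y i)))"
      by (rule sum_mono) (rule pertinent)
    finally show ?thesis .
  qed
  show ?thesis using feas opt by blast
qed

end
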